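(* Let $h:[\ell,r]\to\mathbb{R}$ be a continuous concave function, $s>0$, and $P\subset\mathrm{xExt}(h)$ a set with $\ell,r\in P$ such that for every $y\in\mathrm{xExt}(h)$ there is $x\in P$ with $|x-y|<s$. Suppose $|h'_\pm|\leq m$ for some $m\geq0$, and let $\bar{h}:[\ell,r]\to\mathbb{R}$ be a concave function with $\bar{h}(x)\geq h(x)$ for all $x\in P$. Then $\bar{h}(x)+2ms\geq h(x)$ for all $x\in[\ell,r]$.
   Context: $h'_\pm(x)=\lim_{y\to x^\pm}\frac{h(y)-h(x)}{y-x}$ are the one-sided derivatives. $\mathrm{xExt}(h)=\{\ell,r\}\cup\{x\in(\ell,r): h|_{[x-\delta,x+\delta]}\text{ is not linear for any }\delta>0\}$. *)

theory Defs
  imports "HOL-Analysis.Analysis"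
begin

definition xExt :: "(real \<Rightarrow> real) \<Rightarrow> real \<Rightarrow> real \<Rightarrow> real set" where
  "xExt h l r = {l, r} \<union>
     {x \<in> {l<..<r}. \<not> (\<exists>d>0. \<exists>a b. \<forall>y\<in>{x-d..x+d}. h y = a * y + b)}"

definition has_right_deriv :: "(real \<Rightarrow> real) \<Rightarrow> real \<Rightarrow> real \<Rightarrow> bool" where
  "has_right_deriv h x D \<longleftrightarrow> ((\<lambda>y. (h y - h x) / (y - x)) \<longlongrightarrow> D) (at_right x)"

definition has_left_deriv :: "(real \<Rightarrow> real) \<Rightarrow> real \<Rightarrow> real \<Rightarrow> bool" where
  "has_left_deriv h x D \<longleftrightarrow> ((\<lambda>y. (h y - h x) / (y - x)) \<longlongrightarrow> D) (at_left x)"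

end

theory Submission
  imports Defs
begin

lemma conc3:
  fixes h :: "real \<Rightarrow> real"
  assumes cc: "concave_on {l..r} h" and "l \<le> a" "a < b" "b < c" "c \<le> r"
  shows "(h b - h a) * (c - a) \<ge> (h c - h a) * (b - a)"
proof -
  define u where "u = (c - b) / (c - a)"
  define v where "v = (b - a) / (c - a)"
  have ne: "c - a \<noteq> 0" using assms by simp
  have uv: "u \<ge> 0" "v \<ge> 0" using assms by (auto simp: u_def v_def)
  have "u + v = ((c - b) + (b - a)) / (c - a)" unfolding u_def v_def by (rule add_divide_distrib[symmetric])
  hence uv3: "u + v = 1" using ne by simp
  have "u * a + v * c = ((c - b) * a + (b - a) * c) / (c - a)"
    unfolding u_def v_def by (simp only: times_divide_eq_left add_divide_distrib)
  also have "... = b" using ne by (simp add: field_simps)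
  finally have bb: "u *\<^sub>R a + v *\<^sub>R c = b" by simp
  have "h (u *\<^sub>R a + v *\<^sub>R c) \<ge> u * h a + v * h c"
    using cc uv uv3 assms unfolding concave_on_iff by auto
  hence "h b \<ge> u * h a + v * h c" using bb by simp
  hence "h b * (c - a) \<ge> (u * h a + v * h c) * (c - a)" using assms by (simp add: mult_right_mono)
  also have "(u * h a + v * h c) * (c - a) = (c - b) * h a + (b - a) * h c"
  proof -
    have "u * (c - a) = c - b" "v * (c - a) = b - a" using ne by (simp_all add: u_def v_def)
    moreover have "(u * h a + v * h c) * (c - a) = (u * (c - a)) * h a + (v * (c - a)) * h c"
      by (simp add: algebra_simps)
    ultimately show ?thesis by simp
  qed
  finally show ?thesis by (simp add: algebra_simps)
qed

lemma support:
  fixes h :: "real \<Rightarrow> real"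
  assumes cc: "concave_on {l..r} h" and x: "l < x" "x < r" and D: "has_right_deriv h x D"
    and y: "l \<le> y" "y \<le> r"
  shows "h y \<le> h x + D * (y - x)"
proof -
  have lim: "((\<lambda>w. (h w - h x) / (w - x)) \<longlongrightarrow> D) (at_right x)"
    using D unfolding has_right_deriv_def .
  consider "y = x" | "y > x" | "y < x" by linarith
  then show ?thesis
  proof cases
    case 1 then show ?thesis by simp
  next
    case 2
    have ev: "eventually (\<lambda>w. w \<in> {x<..<y}) (at_right x)"
      using 2 eventually_at_right_real by blast
    have "(h y - h x) / (y - x) \<le> D"
    proof (rule tendsto_lowerbound[OF lim])
      show "\<forall>\<^sub>F w in at_right x. (h y - h x) / (y - x) \<le> (h w - h x) / (w - x)"
      proof (rule eventually_mono[OF ev])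
        fix w assume w: "w \<in> {x<..<y}"
        have "(h w - h x) * (y - x) \<ge> (h y - h x) * (w - x)"
          using conc3[OF cc, of x w y] w x y by auto
        thus "(h y - h x) / (y - x) \<le> (h w - h x) / (w - x)"
          using w by (simp add: field_simps)
      qed
    qed simp
    then show ?thesis using 2 by (simp add: field_simps)
  next
    case 3
    have ev: "eventually (\<lambda>w. w \<in> {x<..<r}) (at_right x)"
      using x eventually_at_right_real by blast
    have "D \<le> (h x - h y) / (x - y)"
    proof (rule tendsto_upperbound[OF lim])
      show "\<forall>\<^sub>F w in at_right x. (h w - h x) / (w - x) \<le> (h x - h y) / (x - y)"
      proof (rule eventually_mono[OF ev])
        fix w assume w: "w \<in> {x<..<r}"
        have "(h x - h y) * (w - y) \<ge> (h w - h y) * (x - y)"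
          using conc3[OF cc, of y x w] w x y 3 by auto
        hence "(h x - h y) * (w - x) \<ge> (h w - h x) * (x - y)"
          by (simp add: algebra_simps)
        thus "(h w - h x) / (w - x) \<le> (h x - h y) / (x - y)"
          using w 3 by (simp add: field_simps)
      qed
    qed simp
    then show ?thesis using 3 by (simp add: field_simps)
  qed
qed


lemma chord:
  fixes g :: "real \<Rightarrow> real"
  assumes cc: "concave_on {l..r} g" and p: "l \<le> p1" "p1 < p2" "p2 \<le> r" "p1 \<le> x" "x \<le> p2"
    and g1: "g p1 \<ge> B + c * (p1 - x)" and g2: "g p2 \<ge> B + c * (p2 - x)"
  shows "g x \<ge> B"
proof -
  consider "x = p1" | "x = p2" | "p1 < x \<and> x < p2" using p by linarith
  then show ?thesis
  proof cases
    case 1 then show ?thesis using g1 by simp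
  next
    case 2 then show ?thesis using g2 by simp
  next
    case 3
    have conc: "(g x - g p1) * (p2 - p1) \<ge> (g p2 - g p1) * (x - p1)"
      using conc3[OF cc, of p1 x p2] 3 p by auto
    have f1: "g p1 * (p2 - x) \<ge> (B + c * (p1 - x)) * (p2 - x)"
      using g1 3 by (intro mult_right_mono) auto
    have f2: "g p2 * (x - p1) \<ge> (B + c * (p2 - x)) * (x - p1)"
      using g2 3 by (intro mult_right_mono) auto
    have "g x * (p2 - p1) \<ge> B * (p2 - p1)"
      using conc f1 f2 by (simp add: algebra_simps)
    then show ?thesis using 3 by simp
  qed
qed

lemma loc_aff:
  fixes h :: "real \<Rightarrow> real"
  assumes e: "l < e" "e < r" and le: "\<forall>y\<in>{l..r}. h y \<le> h0 + c * (y - x0)"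
    and he: "h e = h0 + c * (e - x0)" and d: "d > 0" and aff: "\<forall>y\<in>{e-d..e+d}. h y = a * y + b"
  shows "\<exists>d'>0. \<forall>y\<in>{e-d'..e+d'}. l \<le> y \<and> y \<le> r \<and> h y = h0 + c * (y - x0)"
proof -
  define d' where "d' = min d (min (e - l) (r - e))"
  have d': "d' > 0" "d' \<le> d" "d' \<le> e - l" "d' \<le> r - e" using e d by (auto simp: d'_def)
  have y1: "e - d' \<in> {l..r}" "e - d' \<in> {e-d..e+d}" "e + d' \<in> {l..r}" "e + d' \<in> {e-d..e+d}"
    using d' by auto
  have i1: "a * (e - d') + b \<le> h0 + c * (e - d' - x0)" using le aff y1 by metis
  have i2: "a * (e + d') + b \<le> h0 + c * (e + d' - x0)" using le aff y1 by metis
  have i0: "a * e + b = h0 + c * (e - x0)" using he aff d by auto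
  have "a * d' \<ge> c * d'" "a * d' \<le> c * d'" using i0 i1 i2 by (simp_all add: algebra_simps)
  hence "a * d' = c * d'" by linarith
  hence ac: "a = c" using d' by simp
  have "\<forall>y\<in>{e-d'..e+d'}. l \<le> y \<and> y \<le> r \<and> h y = h0 + c * (y - x0)"
  proof
    fix y assume y: "y \<in> {e-d'..e+d'}"
    have "h y = a * y + b" using aff y d' by auto
    also have "... = h0 + c * (y - x0)" using i0 ac by (simp add: algebra_simps)
    finally show "l \<le> y \<and> y \<le> r \<and> h y = h0 + c * (y - x0)" using y d' by auto
  qed
  then show ?thesis using d' by blast
qed



theorem mainTheorem20:
  fixes h hbar :: "real \<Rightarrow> real" and l r s m :: real and P :: "real set"
  assumes "continuous_on {l..r} h" and "concave_on {l..r} h"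
    and "s > 0"
    and "P \<subseteq> xExt h l r" and "l \<in> P" and "r \<in> P"
    and "\<forall>y\<in>xExt h l r. \<exists>x\<in>P. \<bar>x - y\<bar> < s"
    and "m \<ge> 0"
    and "\<forall>x\<in>{l<..<r}. \<exists>D. has_right_deriv h x D \<and> \<bar>D\<bar> \<le> m"
    and "\<forall>x\<in>{l<..<r}. \<exists>D. has_left_deriv h x D \<and> \<bar>D\<bar> \<le> m"
    and "concave_on {l..r} hbar"
    and "\<forall>x\<in>P. hbar x \<ge> h x"
  shows "\<forall>x\<in>{l..r}. hbar x + 2 * m * s \<ge> h x"
  proof (intro ballI)
  fix x assume xlr: "x \<in> {l..r}"
  note cc = assms(2) and sp = assms(3) and PX = assms(4) and lP = assms(5) and rP = assms(6)
    and near = assms(7) and m0 = assms(8) and hb = assms(11) and hbP = assms(12)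
  have ms: "m * s \<ge> 0" using m0 sp by simp
  show "hbar x + 2 * m * s \<ge> h x"
  proof (cases "x = l \<or> x = r")
    case True
    then have "x \<in> P" using lP rP by auto
    then show ?thesis using hbP ms by force
  next
    case False
    then have x: "l < x" "x < r" using xlr by auto
    then have lr: "l < r" by simp
    obtain Dr where Dr: "\<forall>y\<in>{l<..<r}. has_right_deriv h y (Dr y) \<and> \<bar>Dr y\<bar> \<le> m"
      using assms(9) by metis
    have sup: "\<forall>z\<in>{l<..<r}. \<forall>y\<in>{l..r}. h y \<le> h z + Dr z * (y - z)"
      using support[OF cc] Dr by auto
    have lipI: "\<bar>h y - h z\<bar> \<le> m * \<bar>y - z\<bar>" if "y \<in> {l<..<r}" "z \<in> {l<..<r}" for y z
    proof -
      have a: "h z \<le> h y + Dr y * (z - y)" "h y \<le> h z + Dr z * (y - z)" using sup that by auto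
      have "\<bar>Dr y * (z - y)\<bar> \<le> m * \<bar>y - z\<bar>" "\<bar>Dr z * (y - z)\<bar> \<le> m * \<bar>y - z\<bar>"
        using Dr that by (auto simp: abs_mult abs_minus_commute intro: mult_right_mono)
      then show ?thesis using a by linarith
    qed
    have cont: "continuous_on {l..r} h" using assms(1) .
    have lip1: "\<bar>h y - h z\<bar> \<le> m * \<bar>y - z\<bar>" if "y \<in> {l..r}" "z \<in> {l<..<r}" for y z
    proof -
      have "(\<lambda>y. \<bar>h y - h z\<bar> - m * \<bar>y - z\<bar>) y \<le> 0"
      proof (rule continuous_le_on_closure[of "{l<..<r}" "\<lambda>y. \<bar>h y - h z\<bar> - m * \<bar>y - z\<bar>"])
        show "continuous_on (closure {l<..<r}) (\<lambda>y. \<bar>h y - h z\<bar> - m * \<bar>y - z\<bar>)"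
          using lr cont by (auto intro!: continuous_intros)
        show "y \<in> closure {l<..<r}" using lr that by simp
        show "\<And>y. y \<in> {l<..<r} \<Longrightarrow> \<bar>h y - h z\<bar> - m * \<bar>y - z\<bar> \<le> 0"
          using lipI that by force
      qed
      then show ?thesis by simp
    qed
    have lip: "\<bar>h y - h z\<bar> \<le> m * \<bar>y - z\<bar>" if "y \<in> {l..r}" "z \<in> {l..r}" for y z
    proof -
      have "(\<lambda>z. \<bar>h y - h z\<bar> - m * \<bar>y - z\<bar>) z \<le> 0"
      proof (rule continuous_le_on_closure[of "{l<..<r}" "\<lambda>z. \<bar>h y - h z\<bar> - m * \<bar>y - z\<bar>"])
        show "continuous_on (closure {l<..<r}) (\<lambda>z. \<bar>h y - h z\<bar> - m * \<bar>y - z\<bar>)"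
          using lr cont by (auto intro!: continuous_intros)
        show "z \<in> closure {l<..<r}" using lr that by simp
        show "\<And>z. z \<in> {l<..<r} \<Longrightarrow> \<bar>h y - h z\<bar> - m * \<bar>y - z\<bar> \<le> 0"
          using lip1 that by force
      qed
      then show ?thesis by simp
    qed
    define c where "c = Dr x"
    have cm: "\<bar>c\<bar> \<le> m" using Dr x by (auto simp: c_def)
    have hleA: "\<forall>y\<in>{l..r}. h y \<le> h x + c * (y - x)" using sup x by (auto simp: c_def)
    define Z where "Z = {y \<in> {l..r}. h y - (h x + c * (y - x)) = 0}"
    have Zc: "closed Z" unfolding Z_def
      by (rule continuous_closed_preimage_constant) (use cont in \<open>auto intro!: continuous_intros\<close>)
    have xZ: "x \<in> Z" using x by (auto simp: Z_def)
    have Zb: "bdd_below Z" "bdd_above Z" unfolding Z_def by (auto intro: bdd_belowI bdd_aboveI)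
    define e1 where "e1 = Inf Z"
    define e2 where "e2 = Sup Z"
    have e1Z: "e1 \<in> Z" unfolding e1_def using closed_contains_Inf Zc Zb xZ by blast
    have e2Z: "e2 \<in> Z" unfolding e2_def using closed_contains_Sup Zc Zb xZ by blast
    have e1le: "e1 \<le> y" if "y \<in> Z" for y unfolding e1_def using Zb that by (simp add: cInf_lower)
    have e2ge: "y \<le> e2" if "y \<in> Z" for y unfolding e2_def using Zb that by (simp add: cSup_upper)
    have ex: "e1 \<le> x" "x \<le> e2" using e1le e2ge xZ by auto
    have el: "l \<le> e1" "e2 \<le> r" "h e1 = h x + c * (e1 - x)" "h e2 = h x + c * (e2 - x)"
      using e1Z e2Z by (auto simp: Z_def)
    have onZ: "h y = h x + c * (y - x)" if yin: "y \<in> {e1..e2}" for y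
    proof -
      consider "y = e1" | "y = e2" | "e1 < y \<and> y < e2" using yin by fastforce
      then show ?thesis
      proof cases
        case 1 then show ?thesis using el by simp
      next
        case 2 then show ?thesis using el by simp
      next
        case 3
        have "(h y - h e1) * (e2 - e1) \<ge> (h e2 - h e1) * (y - e1)"
          using conc3[OF cc, of e1 y e2] 3 el by auto
        also have "(h e2 - h e1) * (y - e1) = (c * (y - e1)) * (e2 - e1)"
        proof -
          have "h e2 - h e1 = c * (e2 - e1)" using el by (simp add: algebra_simps)
          then show ?thesis by simp
        qed
        finally have "c * (y - e1) \<le> h y - h e1" using 3 by (simp add: mult_le_cancel_right_pos)
        then have "h y \<ge> h x + c * (y - x)" using el by (simp add: algebra_simps)
        moreover have "h y \<le> h x + c * (y - x)" using hleA 3 el by auto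
        ultimately show ?thesis by linarith
      qed
    qed
    have e1X: "e1 \<in> xExt h l r"
    proof (cases "e1 = l")
      case True then show ?thesis by (simp add: xExt_def)
    next
      case False
      then have e1i: "l < e1" "e1 < r" using el ex x by auto
      have "\<not> (\<exists>d>0. \<exists>a b. \<forall>y\<in>{e1-d..e1+d}. h y = a * y + b)"
      proof
        assume "\<exists>d>0. \<exists>a b. \<forall>y\<in>{e1-d..e1+d}. h y = a * y + b"
        then obtain d a b where "d > 0" "\<forall>y\<in>{e1-d..e1+d}. h y = a * y + b" by blast
        from loc_aff[OF e1i hleA el(3) this] obtain d' where
          d': "d' > 0" "\<forall>y\<in>{e1-d'..e1+d'}. l \<le> y \<and> y \<le> r \<and> h y = h x + c * (y - x)" by blast
        then have "e1 - d' \<in> Z" by (auto simp: Z_def)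
        then have "e1 \<le> e1 - d'" by (rule e1le)
        then show False using d' by simp
      qed
      then show ?thesis using e1i by (simp add: xExt_def)
    qed
    have e2X: "e2 \<in> xExt h l r"
    proof (cases "e2 = r")
      case True then show ?thesis by (simp add: xExt_def)
    next
      case False
      then have e2i: "l < e2" "e2 < r" using el ex x by auto
      have "\<not> (\<exists>d>0. \<exists>a b. \<forall>y\<in>{e2-d..e2+d}. h y = a * y + b)"
      proof
        assume "\<exists>d>0. \<exists>a b. \<forall>y\<in>{e2-d..e2+d}. h y = a * y + b"
        then obtain d a b where "d > 0" "\<forall>y\<in>{e2-d..e2+d}. h y = a * y + b" by blast
        from loc_aff[OF e2i hleA el(4) this] obtain d' where
          d': "d' > 0" "\<forall>y\<in>{e2-d'..e2+d'}. l \<le> y \<and> y \<le> r \<and> h y = h x + c * (y - x)" by blast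
        then have "e2 + d' \<in> Z" by (auto simp: Z_def)
        then have "e2 + d' \<le> e2" by (rule e2ge)
        then show False using d' by simp
      qed
      then show ?thesis using e2i by (simp add: xExt_def)
    qed
    have notin: "q \<notin> xExt h l r" if "e1 < q" "q < e2" for q
    proof -
      have q: "l < q" "q < r" using that el by auto
      define d where "d = min (q - e1) (e2 - q)"
      have "d > 0" using that by (simp add: d_def)
      moreover have "\<forall>y\<in>{q-d..q+d}. h y = c * y + (h x - c * x)"
      proof
        fix y assume "y \<in> {q-d..q+d}"
        then have "y \<in> {e1..e2}" by (auto simp: d_def)
        then show "h y = c * y + (h x - c * x)" using onZ by (simp add: algebra_simps)
      qed
      ultimately show ?thesis using q by (auto simp: xExt_def)
    qed
    obtain q1 where q1: "q1 \<in> P" "\<bar>q1 - e1\<bar> < s" using near e1X by blast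
    obtain q2 where q2: "q2 \<in> P" "\<bar>q2 - e2\<bar> < s" using near e2X by blast
    have q1X: "q1 \<in> xExt h l r" and q2X: "q2 \<in> xExt h l r" using q1 q2 PX by auto
    have q1lr: "q1 \<in> {l..r}" and q2lr: "q2 \<in> {l..r}" using q1X q2X lr by (auto simp: xExt_def)
    have lrr: "l \<in> {l..r}" "r \<in> {l..r}" using lr by auto
    have "hbar x \<ge> h x - 2 * m * s"
    proof (cases "x < q1")
      case True
      have "q1 \<ge> e2" using notin[of q1] True ex q1X by force
      then have qx: "q1 - x < s" using q1 ex by auto
      show ?thesis
      proof (rule chord[OF hb, of l q1 x _ m])
        show "l \<le> l" "l < q1" "q1 \<le> r" "l \<le> x" "x \<le> q1" using x True q1lr by auto
        have "h x - h l \<le> m * (x - l)" using lip[of x l] x lrr by auto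
        then show "h x - 2 * m * s + m * (l - x) \<le> hbar l" using hbP lP ms
          by (force simp: algebra_simps)
        have "h x - h q1 \<le> m * (q1 - x)" using lip[of x q1] x q1lr True by auto
        moreover have "m * (q1 - x) \<le> m * s" using qx m0 by (simp add: mult_left_mono)
        ultimately show "h x - 2 * m * s + m * (q1 - x) \<le> hbar q1" using hbP q1 
          by (force simp: algebra_simps)
      qed
    next
      case F1: False
      show ?thesis
      proof (cases "q2 < x")
        case True
        have "q2 \<le> e1" using notin[of q2] True ex q2X by force
        then have qx: "x - q2 < s" using q2 ex by auto
        show ?thesis
        proof (rule chord[OF hb, of q2 r x _ "-m"])
          show "l \<le> q2" "q2 < r" "r \<le> r" "q2 \<le> x" "x \<le> r" using x True q2lr by auto
          have "h x - h r \<le> m * (r - x)" using lip[of x r] x lrr by auto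
          then show "h x - 2 * m * s + - m * (r - x) \<le> hbar r" using hbP rP ms
            by (force simp: algebra_simps)
          have "h x - h q2 \<le> m * (x - q2)" using lip[of x q2] x q2lr True by auto
          moreover have "m * (x - q2) \<le> m * s" using qx m0 by (simp add: mult_left_mono)
          ultimately show "h x - 2 * m * s + - m * (q2 - x) \<le> hbar q2" using hbP q2
            by (force simp: algebra_simps)
        qed
      next
        case F2: False
        have bnd: "h q \<ge> h x - 2 * m * s + c * (q - x)" if "q \<in> {l..r}" "e \<in> {l..r}"
          "\<bar>q - e\<bar> < s" "h e = h x + c * (e - x)" for q e
        proof -
          have "\<bar>h q - h e\<bar> \<le> m * \<bar>q - e\<bar>" using lip[of q e] that(1,2) by blast
          moreover have "\<bar>c * (q - e)\<bar> \<le> m * \<bar>q - e\<bar>" using cm by (simp add: abs_mult mult_right_mono)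
          moreover have "m * \<bar>q - e\<bar> \<le> m * s" using that m0 by (simp add: mult_left_mono)
          moreover have "c * (q - x) = c * (e - x) + c * (q - e)" by (simp add: algebra_simps)
          ultimately show ?thesis using that by linarith
        qed
        show ?thesis
        proof (cases "q1 = q2")
          case True
          then have "q1 = x" using F1 F2 by simp
          then show ?thesis using hbP q1 ms by force
        next
          case False
          show ?thesis
          proof (rule chord[OF hb, of q1 q2 x _ c])
            show "l \<le> q1" "q1 < q2" "q2 \<le> r" "q1 \<le> x" "x \<le> q2" using F1 F2 False q1lr q2lr by auto
            show "h x - 2 * m * s + c * (q1 - x) \<le> hbar q1"
              using bnd[OF q1lr _ q1(2) el(3)] el ex x hbP q1 by force
            show "h x - 2 * m * s + c * (q2 - x) \<le> hbar q2"
              using bnd[OF q2lr _ q2(2) el(4)] el ex x hbP q2 by force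
          qed
        qed
      qed
    qed
    then show ?thesis by simp
  qed
qed

end
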